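(* Let $u\in M_k$. (a) If $u$ is an interior point of $C(A)$, then $x^u\in\mathcal W'_k$ satisfies a linear differential equation of order $R_k$ over $\mathbb C(\lambda)$, i.e. there are $c_0,\dots,c_{R_k}\in\mathbb C(\lambda)$, not all zero, with $\sum_{i=0}^{R_k}c_iD_\lambda^i(x^u)=0$ in $\mathcal W'_k$. (b) If $u$ is a boundary point of $C(A)$, then $x^u\in\mathcal W'_k$ satisfies a linear differential equation of order $R_k+1$ over $\mathbb C(\lambda)$.
   Context: Let $A=\{\mathbf a_1,\dots,\mathbf a_m\}\subseteq\mathbb Z^n$ be linearly independent over $\mathbb R$, $\mathbf a_0\in\mathbb Z^n$, and $\ell_0,\dots,\ell_m$ positive integers with gcd $1$, $\ell_0\mathbf a_0=\sum_{j=1}^m\ell_j\mathbf a_j$, $\ell_0=\sum_{j=1}^m\ell_j$. Let $f_\lambda=\sum_{j=1}^m\ell_jx^{\mathbf a_j}-\ell_0\lambda x^{\mathbf a_0}$. Let $V$ be the real span of $A$, $V_{\mathbb Z}=V\cap\mathbb Z^n$, $C(A)$ the closed real cone generated by $A$ (interior and boundary are relative to $V$), $M=V_{\mathbb Z}\cap C(A)$, $\mathbb ZA_+$ the group generated by $A\cup\{\mathbf a_0\}$. Fix a coset $\mathcal C_k$ of $\mathbb ZA_+$ in $V_{\mathbb Z}$, $M_k=M\cap\mathcal C_k$, $S'_k$ the $\mathbb C(\lambda)$-span of $\{x^u:u\in M_k\}$, $D_i=x_i\partial/\partial x_i+x_i\partial f_\lambda/\partial x_i$ ($i=1,\dots,n$),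 $D_\lambda=\partial/\partial\lambda-\ell_0x^{\mathbf a_0}$, and $\mathcal W'_k=S'_k/\sum_iD_iS'_k$ (with $D_\lambda$ acting on it). Let $P(A)=\{\sum_jc_j\mathbf a_j:0\le c_j<1\}$, $\mathcal B=V_{\mathbb Z}\cap P(A)$, $\mathcal B_k=\mathcal B\cap\mathcal C_k$, and let $R_k$ be the number of elements $\sum_jv_j\mathbf a_j$ of $\mathcal B_k$ with all $v_j>0$ (interior points of $P(A)$). *)

theory Defs
  imports "HOL-Analysis.Analysis" "HOL-Computational_Algebra.Computational_Algebra"
begin

type_synonym ratfun = "complex poly fract"

definition lam :: ratfun where
  "lam = Fract [:0, 1:] 1"

definition ratfun_deriv :: "ratfun \<Rightarrow> ratfun" where
  "ratfun_deriv r = (THE s. \<forall>p q. q \<noteq> 0 \<longrightarrow> r = Fract p q \<longrightarrow>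
      s = Fract (pderiv p * q - p * pderiv q) (q * q))"

text \<open>An element of the C(lambda)-span of monomials x^u (u a lattice point in R^n, with
  'n a finite index type) is represented by its coefficient function g, which must have
  finite support.\<close>

type_synonym 'n lpoly = "(real ^ 'n) \<Rightarrow> ratfun"

definition monom :: "real ^ 'n \<Rightarrow> 'n lpoly" where
  "monom u = (\<lambda>w. if w = u then 1 else 0)"

definition Sk :: "(real ^ 'n) set \<Rightarrow> 'n lpoly set" where
  "Sk Mk = {g. finite {w. g w \<noteq> 0} \<and> {w. g w \<noteq> 0} \<subseteq> Mk}"

text \<open>Exponent vectors a 0, ..., a m (a 0 = a_0), weights l 0, ..., l m.
  f_lambda = sum_{j=1}^m l_j x^{a_j} - l_0 lambda x^{a_0}.
  D_i (g) = x_i d g / d x_i + x_i (d f_lambda/ d x_i) g, coefficientwise: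
  x_i d/dx_i x^w = w_i x^w and x_i d f/dx_i = sum_j l_j a_{j,i} x^{a_j} - l_0 lambda a_{0,i} x^{a_0}.\<close>
definition Dx :: "nat \<Rightarrow> (nat \<Rightarrow> real ^ 'n) \<Rightarrow> (nat \<Rightarrow> nat) \<Rightarrow> 'n \<Rightarrow> 'n lpoly \<Rightarrow> 'n lpoly" where
  "Dx m a l i g = (\<lambda>w. of_int \<lfloor>w $ i\<rfloor> * g w
      + (\<Sum>j\<in>{1..m}. of_nat (l j) * of_int \<lfloor>a j $ i\<rfloor> * g (w - a j))
      - of_nat (l 0) * lam * of_int \<lfloor>a 0 $ i\<rfloor> * g (w - a 0))"

definition Dlam :: "(nat \<Rightarrow> real ^ 'n) \<Rightarrow> (nat \<Rightarrow> nat) \<Rightarrow> 'n lpoly \<Rightarrow> 'n lpoly" where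
  "Dlam a l g = (\<lambda>w. ratfun_deriv (g w) - of_nat (l 0) * g (w - a 0))"

definition DSk :: "nat \<Rightarrow> (nat \<Rightarrow> real ^ 'n) \<Rightarrow> (nat \<Rightarrow> nat) \<Rightarrow> (real ^ 'n) set \<Rightarrow> 'n lpoly set" where
  "DSk m a l Mk = {(\<lambda>w. \<Sum>i\<in>UNIV. Dx m a l i (G i) w) | G. \<forall>i. G i \<in> Sk Mk}"

definition lattice_pt :: "real ^ 'n \<Rightarrow> bool" where
  "lattice_pt u \<longleftrightarrow> (\<forall>i. u $ i \<in> \<int>)"

definition VZ :: "nat \<Rightarrow> (nat \<Rightarrow> real ^ 'n) \<Rightarrow> (real ^ 'n) set" where
  "VZ m a = {u \<in> span (a ` {1..m}). lattice_pt u}"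

definition coneA :: "nat \<Rightarrow> (nat \<Rightarrow> real ^ 'n) \<Rightarrow> (real ^ 'n) set" where
  "coneA m a = closure (convex_cone hull (a ` {1..m}))"

definition ZAplus :: "nat \<Rightarrow> (nat \<Rightarrow> real ^ 'n) \<Rightarrow> (real ^ 'n) set" where
  "ZAplus m a = {(\<Sum>j\<in>{0..m}. of_int (z j) *\<^sub>R a j) | z. True}"

definition Bk_int :: "nat \<Rightarrow> (nat \<Rightarrow> real ^ 'n) \<Rightarrow> (real ^ 'n) set \<Rightarrow> (real ^ 'n) set" where
  "Bk_int m a Ck = {u \<in> VZ m a \<inter> Ck. \<exists>v. (\<forall>j\<in>{1..m}. 0 < v j \<and> v j < 1)
                                     \<and> u = (\<Sum>j\<in>{1..m}. v j *\<^sub>R a j)}"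

end

theory Submission
  imports Defs
begin

lemma lin_dep:
  fixes \<alpha> :: "'j \<Rightarrow> 'x \<Rightarrow> 'k::field"
  assumes "finite F"
  shows "finite J \<Longrightarrow> card F < card J \<Longrightarrow> (\<forall>j\<in>J. \<forall>x. x \<notin> F \<longrightarrow> \<alpha> j x = 0) \<Longrightarrow>
    \<exists>c. (\<exists>j\<in>J. c j \<noteq> 0) \<and> (\<forall>x. (\<Sum>j\<in>J. c j * \<alpha> j x) = 0)"
  using assms
proof (induction F arbitrary: J \<alpha> rule: finite_induct)
  case empty
  then obtain j where "j \<in> J" by fastforce
  then show ?case using empty by (intro exI[of _ "\<lambda>_. 1"]) auto
next
  case (insert f F)
  show ?case
  proof (cases "\<forall>j\<in>J. \<alpha> j f = 0")
    case True
    have "\<forall>j\<in>J. \<forall>x. x \<notin> F \<longrightarrow> \<alpha> j x = 0"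
    proof (intro ballI allI impI)
      fix j x assume "j \<in> J" "x \<notin> F"
      then show "\<alpha> j x = 0" using True insert.prems by (cases "x = f") auto
    qed
    moreover have "card F < card J" using insert.prems insert.hyps by auto
    ultimately show ?thesis using insert.IH insert.prems by blast
  next
    case False
    then obtain k where k: "k \<in> J" "\<alpha> k f \<noteq> 0" by blast
    define \<beta> where "\<beta> j x = \<alpha> j x - (\<alpha> j f / \<alpha> k f) * \<alpha> k x" for j x
    have "finite (J - {k})" using insert.prems by auto
    moreover have "card F < card (J - {k})" using insert.prems insert.hyps k by auto
    moreover have "\<forall>j\<in>J - {k}. \<forall>x. x \<notin> F \<longrightarrow> \<beta> j x = 0"
    proof (intro ballI allI impI)
      fix j x assume "j \<in> J - {k}" "x \<notin> F"
      then show "\<beta> j x = 0" using insert.prems k unfolding \<beta>_def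
        by (cases "x = f") auto
    qed
    ultimately obtain c where c: "\<exists>j\<in>J - {k}. c j \<noteq> 0" "\<forall>x. (\<Sum>j\<in>J - {k}. c j * \<beta> j x) = 0"
      using insert.IH by blast
    define d where "d j = (if j = k then - (\<Sum>i\<in>J - {k}. c i * (\<alpha> i f / \<alpha> k f)) else c j)" for j
    have "\<exists>j\<in>J. d j \<noteq> 0" using c(1) unfolding d_def by auto
    moreover have "(\<Sum>j\<in>J. d j * \<alpha> j x) = 0" for x
    proof -
      have "(\<Sum>j\<in>J. d j * \<alpha> j x) = d k * \<alpha> k x + (\<Sum>j\<in>J - {k}. d j * \<alpha> j x)"
        using k insert.prems by (simp add: sum.remove)
      also have "(\<Sum>j\<in>J - {k}. d j * \<alpha> j x) = (\<Sum>j\<in>J - {k}. c j * \<alpha> j x)"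
        unfolding d_def by (rule sum.cong) auto
      also have "\<dots> = (\<Sum>j\<in>J - {k}. c j * \<beta> j x) + (\<Sum>j\<in>J - {k}. c j * (\<alpha> j f / \<alpha> k f)) * \<alpha> k x"
      proof -
        have "(\<Sum>j\<in>J - {k}. c j * \<beta> j x) = (\<Sum>j\<in>J - {k}. c j * \<alpha> j x - (c j * (\<alpha> j f / \<alpha> k f)) * \<alpha> k x)"
          unfolding \<beta>_def by (rule sum.cong) (auto simp: algebra_simps)
        also have "\<dots> = (\<Sum>j\<in>J - {k}. c j * \<alpha> j x) - (\<Sum>j\<in>J - {k}. c j * (\<alpha> j f / \<alpha> k f)) * \<alpha> k x"
          by (simp add: sum_subtractf sum_distrib_right)
        finally show ?thesis by simp
      qed
      finally show ?thesis using c(2) unfolding d_def by simp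
    qed
    ultimately show ?thesis by blast
  qed
qed

definition emb :: "real \<Rightarrow> ratfun" where "emb r = Fract [:complex_of_real r:] 1"

lemma emb_add: "emb (x + y) = emb x + emb y"
  unfolding emb_def by simp
lemma emb_mult: "emb (x * y) = emb x * emb y"
  unfolding emb_def by (simp add: ac_simps)
lemma emb_0[simp]: "emb 0 = 0"
  unfolding emb_def by (simp add: Zero_fract_def[symmetric])
lemma emb_1[simp]: "emb 1 = 1"
  unfolding emb_def by (simp add: One_fract_def[symmetric] one_pCons[symmetric])
lemma emb_sum: "emb (\<Sum>i\<in>S. f i) = (\<Sum>i\<in>S. emb (f i))"
  by (induction S rule: infinite_finite_induct) (auto simp: emb_add)
lemma emb_of_nat[simp]: "emb (of_nat n) = of_nat n"
  by (induction n) (auto simp: emb_add)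
lemma emb_uminus: "emb (- x) = - emb x" unfolding emb_def by simp

lemma emb_of_int[simp]: "emb (of_int n) = of_int n"
proof (cases n rule: int_cases)
  case (nonneg k) then show ?thesis by simp
next
  case (neg k) then show ?thesis by (simp add: emb_uminus del: of_nat_Suc)
qed

lemma lam_pow: "lam ^ r = Fract ([:0,1:] ^ r) 1"
  by (induction r) (auto simp: lam_def One_fract_def[symmetric])

lemma one_minus_lam_pow: "r \<ge> 1 \<Longrightarrow> 1 - lam ^ r \<noteq> 0"
proof
  assume r: "r \<ge> 1" and "1 - lam ^ r = 0"
  then have "Fract (1 - [:0,1:] ^ r) 1 = (0::ratfun)"
    by (simp add: lam_pow One_fract_def)
  then have "Fract (1 - [:0,1:] ^ r) 1 = Fract (0::complex poly) 1"
    by (simp only: Zero_fract_def)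
  then have "(1 - [:0,1:] ^ r :: complex poly) = 0" by (simp add: eq_fract)
  then have "poly (1 - [:0,1:] ^ r :: complex poly) 0 = 0" by simp
  then show False using r by (simp add: power_0_left)
qed

lemma ratfun_deriv_0: "ratfun_deriv 0 = 0"
  unfolding ratfun_deriv_def
proof (rule the_equality)
  show "\<forall>p q. q \<noteq> (0::complex poly) \<longrightarrow> 0 = Fract p q \<longrightarrow> 0 = Fract (pderiv p * q - p * pderiv q) (q * q)"
  proof (intro allI impI)
    fix p q :: "complex poly" assume q: "q \<noteq> 0" and "0 = Fract p q"
    then have "Fract p q = Fract 0 1" by (simp add: Zero_fract_def[symmetric])
    then have "p = 0" using eq_fract(1)[of q 1 p 0] q by simp
    then show "0 = Fract (pderiv p * q - p * pderiv q) (q * q)"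
      by (simp add: eq_fract(3)[of "q*q" 1] Zero_fract_def[symmetric])
  qed
next
  fix s assume H: "\<forall>p q. q \<noteq> (0::complex poly) \<longrightarrow> 0 = Fract p q \<longrightarrow> s = Fract (pderiv p * q - p * pderiv q) (q * q)"
  have "s = Fract (pderiv 0 * 1 - 0 * pderiv 1) (1 * 1)"
    by (rule H[rule_format]) (simp_all add: Zero_fract_def)
  then have "s = Fract (0::complex poly) 1" by simp
  then show "s = 0" by (metis Zero_fract_def)
qed

lemma finite_lattice_bounded:
  "finite {w :: real ^ 'n. lattice_pt w \<and> norm w \<le> B}"
proof -
  let ?K = "\<lceil>B\<rceil>"
  have "{w :: real ^ 'n. lattice_pt w \<and> norm w \<le> B} \<subseteq>
        (\<lambda>f. \<chi> i. real_of_int (f i)) ` (PiE UNIV (\<lambda>_. {-?K..?K}))"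
  proof
    fix w :: "real ^ 'n" assume w: "w \<in> {w. lattice_pt w \<and> norm w \<le> B}"
    have wi: "real_of_int \<lfloor>w $ i\<rfloor> = w $ i" for i
    proof -
      have "w $ i \<in> \<int>" using w unfolding lattice_pt_def by auto
      then obtain n where "w $ i = of_int n" by (auto elim!: Ints_cases)
      then show ?thesis by simp
    qed
    have "\<bar>w $ i\<bar> \<le> B" for i using w component_le_norm_cart[of w i] by auto
    have "\<lfloor>w $ i\<rfloor> \<in> {-?K..?K}" for i
    proof -
      have b: "\<bar>w $ i\<bar> \<le> B" by fact
      have f1: "real_of_int \<lfloor>w $ i\<rfloor> \<le> w $ i" by (rule of_int_floor_le)
      have f2: "w $ i < real_of_int \<lfloor>w $ i\<rfloor> + 1" by (rule real_of_int_floor_add_one_gt)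
      have c1: "B \<le> real_of_int ?K" by (rule le_of_int_ceiling)
      have "real_of_int \<lfloor>w $ i\<rfloor> \<le> real_of_int ?K" using f1 b c1 by linarith
      moreover have "real_of_int (-?K) < real_of_int (\<lfloor>w $ i\<rfloor> + 1)" using f2 b c1 by simp linarith
      ultimately show ?thesis by simp
    qed
    then have "(\<lambda>i. \<lfloor>w $ i\<rfloor>) \<in> PiE UNIV (\<lambda>_. {-?K..?K})" by auto
    moreover have "w = (\<chi> i. real_of_int (\<lfloor>w $ i\<rfloor>))" by (subst vec_eq_iff) (simp only: vec_lambda_beta wi, simp)
    ultimately show "w \<in> (\<lambda>f. \<chi> i. real_of_int (f i)) ` (PiE UNIV (\<lambda>_. {-?K..?K}))" by (intro image_eqI[where x="\<lambda>i. \<lfloor>w $ i\<rfloor>"]) simp_all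
  qed
  moreover have "finite (PiE (UNIV :: 'n set) (\<lambda>_. {-?K..?K}))" by (rule finite_PiE) auto
  ultimately show ?thesis by (meson finite_imageI finite_subset)
qed

lemma lattice_add: "lattice_pt x \<Longrightarrow> lattice_pt y \<Longrightarrow> lattice_pt (x + y)"
  unfolding lattice_pt_def by auto
lemma lattice_diff: "lattice_pt x \<Longrightarrow> lattice_pt y \<Longrightarrow> lattice_pt (x - y)"
  unfolding lattice_pt_def by auto

lemma convex_cone_sum:
  assumes "convex_cone S" "finite J" "\<forall>k\<in>J. x k \<in> S"
  shows "sum x J \<in> S"
  using assms(2,3)
  by (induction J rule: finite_induct) (auto simp: assms(1) convex_cone_add convex_cone_contains_0)

lemma emb_eq_0: "emb r = 0 \<Longrightarrow> r = 0"
proof -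
  assume "emb r = 0"
  then have "Fract [:complex_of_real r:] 1 = Fract (0::complex poly) 1"
    unfolding emb_def by (simp add: Zero_fract_def[symmetric])
  then have "[:complex_of_real r:] = 0" using eq_fract(1)[of 1 1 "[:complex_of_real r:]" 0] by simp
  then show "r = 0" by simp
qed

lemma ratfun_of_nat_nz: "n > 0 \<Longrightarrow> (of_nat n :: ratfun) \<noteq> 0"
proof
  assume "n > 0" "(of_nat n :: ratfun) = 0"
  then have "emb (of_nat n) = 0" by simp
  then have "(of_nat n :: real) = 0" by (rule emb_eq_0)
  then show False using \<open>n > 0\<close> by simp
qed

lemma sum_mult_delta:
  fixes f :: "'b \<Rightarrow> 'a::comm_ring_1"
  assumes "finite S" "j \<in> S"
  shows "(\<Sum>k\<in>S. f k * (if k = j then 1 else 0)) = f j"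
proof -
  have "(\<Sum>k\<in>S. f k * (if k = j then 1 else 0)) = (\<Sum>k\<in>S. if k = j then f k else 0)"
    by (rule sum.cong) auto
  also have "\<dots> = f j" using assms by simp
  finally show ?thesis .
qed

locale P81 =
  fixes m :: nat and a :: "nat \<Rightarrow> real ^ 'n" and l :: "nat \<Rightarrow> nat" and Ck :: "(real ^ 'n) set"
  assumes lat: "\<forall>j\<in>{0..m}. lattice_pt (a j)"
    and inj: "inj_on a {1..m}"
    and indep: "independent (a ` {1..m})"
    and lpos: "\<forall>j\<in>{0..m}. 0 < l j"
    and rel: "real (l 0) *\<^sub>R a 0 = (\<Sum>j\<in>{1..m}. real (l j) *\<^sub>R a j)"
    and lsum: "l 0 = (\<Sum>j\<in>{1..m}. l j)"
    and coset: "\<exists>v\<in>VZ m a. Ck = (\<lambda>w. v + w) ` ZAplus m a"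
begin

definition co :: "nat \<Rightarrow> real ^ 'n \<Rightarrow> real" where
  "co j = (SOME g. linear g \<and> (\<forall>k\<in>{1..m}. g (a k) = (if k = j then 1 else 0)))"

lemma co_ex: "\<exists>g. linear g \<and> (\<forall>k\<in>{1..m}. g (a k) = (if k = j then (1::real) else 0))"
proof -
  define f :: "real ^ 'n \<Rightarrow> real" where "f x = (if j \<in> {1..m} \<and> x = a j then 1 else 0)" for x
  have "\<exists>g. linear g \<and> (\<forall>x\<in>a ` {1..m}. g x = f x)"
    by (rule linear_independent_extend[OF indep])
  then obtain g where g1: "linear g" and g2: "\<forall>x\<in>a ` {1..m}. g x = f x"
    by (elim exE conjE)
  have "\<forall>k\<in>{1..m}. g (a k) = (if k = j then 1 else 0)"
  proof
    fix k assume k: "k \<in> {1..m}"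
    then have "g (a k) = f (a k)" using g2 by simp
    also have "\<dots> = (if k = j then 1 else 0)"
    proof cases
      assume jin: "j \<in> {1..m}"
      then have "a k = a j \<longleftrightarrow> k = j" using inj k by (meson inj_on_eq_iff)
      then show ?thesis using jin by (simp add: f_def)
    next
      assume jn: "j \<notin> {1..m}"
      then have "k \<noteq> j" using k by blast
      moreover have "\<not> (j \<in> {1..m} \<and> a k = a j)" using jn by blast
      ultimately show ?thesis unfolding f_def by presburger
    qed
    finally show "g (a k) = (if k = j then 1 else 0)" .
  qed
  then show ?thesis using g1 by blast
qed

lemma co_lin: "linear (co j)" and co_a: "k \<in> {1..m} \<Longrightarrow> co j (a k) = (if k = j then 1 else 0)"
  using someI_ex[OF co_ex[of j]] unfolding co_def by auto

lemma co_add: "co j (x + y) = co j x + co j y" using linear_add[OF co_lin] .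
lemma co_diff: "co j (x - y) = co j x - co j y" using linear_diff[OF co_lin] .
lemma co_scale: "co j (c *\<^sub>R x) = c * co j x" using linear_scale[OF co_lin] by simp
lemma co_sum: "co j (sum f S) = (\<Sum>i\<in>S. co j (f i))" using linear_sum[OF co_lin] .
lemma co_0: "co j 0 = 0" using linear_0[OF co_lin] .

lemma m_pos: "m \<ge> 1"
proof (rule ccontr)
  assume "\<not> m \<ge> 1" then have "m = 0" by simp
  then show False using lsum lpos by simp
qed

lemma l0_pos: "l 0 > 0" using lpos by auto
lemma lj_pos: "j \<in> {1..m} \<Longrightarrow> l j > 0" using lpos by auto

lemma co_a0: "j \<in> {1..m} \<Longrightarrow> co j (a 0) = real (l j) / real (l 0)"
proof -
  assume j: "j \<in> {1..m}"
  have "real (l 0) * co j (a 0) = co j (\<Sum>k\<in>{1..m}. real (l k) *\<^sub>R a k)"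
    using rel co_scale by metis
  also have "\<dots> = (\<Sum>k\<in>{1..m}. real (l k) * (if k = j then 1 else 0))"
    by (simp add: co_sum co_scale co_a)
  also have "\<dots> = real (l j)" using j by (simp only: sum_mult_delta[OF finite_atLeastAtMost])
  finally show ?thesis using l0_pos by (simp add: field_simps)
qed

lemma co_repr: "w \<in> span (a ` {1..m}) \<Longrightarrow> w = (\<Sum>k\<in>{1..m}. co k w *\<^sub>R a k)"
proof -
  assume "w \<in> span (a ` {1..m})"
  then obtain u where "w = (\<Sum>v\<in>a ` {1..m}. u v *\<^sub>R v)" using span_finite[of "a ` {1..m}"] by auto
  also have "\<dots> = (\<Sum>k\<in>{1..m}. u (a k) *\<^sub>R a k)" using sum.reindex[OF inj, of "\<lambda>v. u v *\<^sub>R v"] by (simp add: o_def)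
  finally have w: "w = (\<Sum>k\<in>{1..m}. u (a k) *\<^sub>R a k)" .
  have "co j w = u (a j)" if j: "j \<in> {1..m}" for j
  proof -
    have "co j w = (\<Sum>k\<in>{1..m}. u (a k) * (if k = j then 1 else 0))"
      by (subst w) (simp add: co_sum co_scale co_a)
    also have "\<dots> = u (a j)" using j by (simp only: sum_mult_delta[OF finite_atLeastAtMost])
    finally show ?thesis .
  qed
  then show ?thesis using w by (metis (no_types, lifting) sum.cong)
qed

lemma co_expand: "co j x = (\<Sum>i\<in>UNIV. x $ i * co j (axis i 1))"
proof -
  have "co j x = co j (\<Sum>i\<in>UNIV. x $ i *\<^sub>R axis i 1)"
    using basis_expansion[of x] by (simp add: scalar_mult_eq_scaleR)
  also have "\<dots> = (\<Sum>i\<in>UNIV. x $ i * co j (axis i 1))" by (simp add: co_sum co_scale)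
  finally show ?thesis .
qed

definition deg :: "real ^ 'n \<Rightarrow> real" where "deg w = (\<Sum>j\<in>{1..m}. co j w)"

lemma deg_add: "deg (x + y) = deg x + deg y" unfolding deg_def by (simp add: co_add sum.distrib)
lemma deg_diff: "deg (x - y) = deg x - deg y" unfolding deg_def by (simp add: co_diff sum_subtractf)
lemma deg_a: "k \<in> {1..m} \<Longrightarrow> deg (a k) = 1"
proof -
  assume k: "k \<in> {1..m}"
  have "deg (a k) = (\<Sum>j\<in>{1..m}. if j = k then 1 else 0)" unfolding deg_def
    by (rule sum.cong) (auto simp: co_a[OF k])
  also have "\<dots> = 1" using k by simp
  finally show ?thesis .
qed
lemma deg_a0: "deg (a 0) = 1"
proof -
  have "deg (a 0) = (\<Sum>j\<in>{1..m}. real (l j) / real (l 0))" unfolding deg_def by (simp add: co_a0)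
  also have "\<dots> = real (\<Sum>j\<in>{1..m}. l j) / real (l 0)" by (simp add: sum_divide_distrib)
  also have "\<dots> = real (l 0) / real (l 0)" by (simp only: lsum[symmetric])
  also have "\<dots> = 1" using l0_pos by simp
  finally show ?thesis .
qed

lemma a_span: "j \<in> {0..m} \<Longrightarrow> a j \<in> span (a ` {1..m})"
proof -
  assume j: "j \<in> {0..m}"
  show ?thesis
  proof (cases "j = 0")
    case True
    have "a 0 = (1 / real (l 0)) *\<^sub>R (\<Sum>k\<in>{1..m}. real (l k) *\<^sub>R a k)"
      by (subst rel[symmetric]) (use l0_pos in simp)
    also have "\<dots> \<in> span (a ` {1..m})"
      by (intro span_mul span_sum) (auto intro: span_base)
    finally show ?thesis using True by simp
  next
    case False then show ?thesis using j by (auto intro: span_base)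
  qed
qed

lemma a_VZ: "j \<in> {0..m} \<Longrightarrow> a j \<in> VZ m a"
  using a_span lat unfolding VZ_def by auto

lemma VZ_add: "x \<in> VZ m a \<Longrightarrow> y \<in> VZ m a \<Longrightarrow> x + y \<in> VZ m a"
  unfolding VZ_def by (auto intro: span_add lattice_add)
lemma VZ_diff: "x \<in> VZ m a \<Longrightarrow> y \<in> VZ m a \<Longrightarrow> x - y \<in> VZ m a"
  unfolding VZ_def by (auto intro: span_diff lattice_diff)

lemma ZA_shift:
  assumes "x \<in> ZAplus m a" "k \<in> {0..m}"
  shows "x + of_int e *\<^sub>R a k \<in> ZAplus m a"
proof -
  obtain z where x: "x = (\<Sum>j\<in>{0..m}. of_int (z j) *\<^sub>R a j)" using assms(1) unfolding ZAplus_def by auto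
  define z' where "z' j = z j + (if j = k then e else 0)" for j
  have "(\<Sum>j\<in>{0..m}. of_int (z' j) *\<^sub>R a j) = (\<Sum>j\<in>{0..m}. of_int (z j) *\<^sub>R a j + (if j = k then of_int e *\<^sub>R a j else 0))"
    unfolding z'_def by (rule sum.cong) (auto simp: scaleR_add_left)
  also have "\<dots> = x + of_int e *\<^sub>R a k" using assms(2) by (simp add: sum.distrib x)
  finally have "x + of_int e *\<^sub>R a k = (\<Sum>j\<in>{0..m}. of_int (z' j) *\<^sub>R a j)" by simp
  then show ?thesis unfolding ZAplus_def by blast
qed

lemma Ck_shift:
  assumes "x \<in> Ck" "k \<in> {0..m}"
  shows "x + of_int e *\<^sub>R a k \<in> Ck"
proof -
  obtain v where v: "Ck = (\<lambda>w. v + w) ` ZAplus m a" using coset by auto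
  then obtain y where "y \<in> ZAplus m a" "x = v + y" using assms(1) by auto
  then show ?thesis using ZA_shift[of y k e] assms(2) v by (auto simp: add.assoc)
qed

lemma Ck_add0: "x \<in> Ck \<Longrightarrow> x + a 0 \<in> Ck" using Ck_shift[of x 0 1] by simp
lemma Ck_diff: "x \<in> Ck \<Longrightarrow> k \<in> {0..m} \<Longrightarrow> x - a k \<in> Ck" using Ck_shift[of x k "-1"] by simp

lemma cone_co: "w \<in> coneA m a \<Longrightarrow> j \<in> {1..m} \<Longrightarrow> co j w \<ge> 0"
proof -
  assume w: "w \<in> coneA m a" and j: "j \<in> {1..m}"
  define K where "K = {x. \<forall>j\<in>{1..m}. 0 \<le> co j x}"
  have cont: "continuous_on UNIV (co k)" for k
    using co_lin linear_continuous_on linear_conv_bounded_linear by blast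
  have "K = (\<Inter>k\<in>{1..m}. {x. 0 \<le> co k x})" unfolding K_def by auto
  moreover have "closed {x. 0 \<le> co k x}" for k
    by (rule closed_Collect_le[OF continuous_on_const cont])
  ultimately have "closed K" by auto
  moreover have "convex_cone K" unfolding convex_cone_iff K_def
    by (auto simp: co_0 co_add co_scale)
  moreover have "a ` {1..m} \<subseteq> K" unfolding K_def by (auto simp: co_a)
  ultimately have "coneA m a \<subseteq> K" unfolding coneA_def
    by (meson closure_minimal hull_minimal)
  then show ?thesis using w j unfolding K_def by auto
qed

lemma pos_cone: "w \<in> span (a ` {1..m}) \<Longrightarrow> \<forall>j\<in>{1..m}. co j w \<ge> 0 \<Longrightarrow> w \<in> coneA m a"
proof -
  assume w: "w \<in> span (a ` {1..m})" and c: "\<forall>j\<in>{1..m}. co j w \<ge> 0"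
  have "\<forall>k\<in>{1..m}. co k w *\<^sub>R a k \<in> convex_cone hull (a ` {1..m})"
  proof
    fix k assume k: "k \<in> {1..m}"
    have "a k \<in> convex_cone hull (a ` {1..m})" by (rule hull_inc) (use k in simp)
    then show "co k w *\<^sub>R a k \<in> convex_cone hull (a ` {1..m})"
      using convex_cone_scaleR[OF convex_cone_convex_cone_hull] c k by blast
  qed
  then have "(\<Sum>k\<in>{1..m}. co k w *\<^sub>R a k) \<in> convex_cone hull (a ` {1..m})"
    by (intro convex_cone_sum[OF convex_cone_convex_cone_hull]) auto
  then show ?thesis using co_repr[OF w] closure_subset unfolding coneA_def by auto
qed

end

lemma Dx_add: "Dx m a l i (\<lambda>z. g z + h z) w = Dx m a l i g w + Dx m a l i h w"
  unfolding Dx_def by (simp add: algebra_simps sum.distrib)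
lemma Dx_smult: "Dx m a l i (\<lambda>z. c * g z) w = c * Dx m a l i g w"
  unfolding Dx_def by (simp add: algebra_simps sum_distrib_left)
lemma Dx_zero: "Dx m a l i (\<lambda>z. 0) w = 0"
  unfolding Dx_def by simp

lemma Sk_add: "g \<in> Sk M \<Longrightarrow> h \<in> Sk M \<Longrightarrow> (\<lambda>z. g z + h z) \<in> Sk M"
proof -
  assume g: "g \<in> Sk M" and h: "h \<in> Sk M"
  have "{w. g w + h w \<noteq> 0} \<subseteq> {w. g w \<noteq> 0} \<union> {w. h w \<noteq> 0}" by auto
  then show ?thesis using g h unfolding Sk_def by (auto intro: finite_subset)
qed
lemma Sk_smult: "g \<in> Sk M \<Longrightarrow> (\<lambda>z. c * g z) \<in> Sk M"
proof -
  assume g: "g \<in> Sk M"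
  have "{w. c * g w \<noteq> 0} \<subseteq> {w. g w \<noteq> 0}" by auto
  then show ?thesis using g unfolding Sk_def by (auto intro: finite_subset)
qed
lemma Sk_zero: "(\<lambda>z. 0) \<in> Sk M" unfolding Sk_def by simp
lemma monom_Sk: "w \<in> M \<Longrightarrow> (\<lambda>z. c * monom w z) \<in> Sk M"
proof -
  assume w: "w \<in> M"
  have "{z. c * monom w z \<noteq> 0} \<subseteq> {w}" unfolding monom_def by auto
  then show ?thesis using w unfolding Sk_def by (auto intro: finite_subset)
qed

lemma DSk_add: "f \<in> DSk m a l M \<Longrightarrow> g \<in> DSk m a l M \<Longrightarrow> (\<lambda>z. f z + g z) \<in> DSk m a l M"
proof -
  assume "f \<in> DSk m a l M" "g \<in> DSk m a l M"
  then obtain F G where F: "\<forall>i. F i \<in> Sk M" "f = (\<lambda>w. \<Sum>i\<in>UNIV. Dx m a l i (F i) w)"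
    and G: "\<forall>i. G i \<in> Sk M" "g = (\<lambda>w. \<Sum>i\<in>UNIV. Dx m a l i (G i) w)"
    unfolding DSk_def by blast
  define H where "H i = (\<lambda>z. F i z + G i z)" for i
  have "\<forall>i. H i \<in> Sk M" unfolding H_def using F G by (auto intro: Sk_add)
  moreover have "(\<lambda>z. f z + g z) = (\<lambda>w. \<Sum>i\<in>UNIV. Dx m a l i (H i) w)"
    unfolding H_def F G by (simp add: Dx_add sum.distrib)
  ultimately show ?thesis unfolding DSk_def by blast
qed

lemma DSk_smult: "f \<in> DSk m a l M \<Longrightarrow> (\<lambda>z. c * f z) \<in> DSk m a l M"
proof -
  assume "f \<in> DSk m a l M"
  then obtain F where F: "\<forall>i. F i \<in> Sk M" "f = (\<lambda>w. \<Sum>i\<in>UNIV. Dx m a l i (F i) w)"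
    unfolding DSk_def by blast
  define H where "H i = (\<lambda>z. c * F i z)" for i
  have "\<forall>i. H i \<in> Sk M" unfolding H_def using F by (auto intro: Sk_smult)
  moreover have "(\<lambda>z. c * f z) = (\<lambda>w. \<Sum>i\<in>UNIV. Dx m a l i (H i) w)"
    unfolding H_def F by (simp add: Dx_smult sum_distrib_left)
  ultimately show ?thesis unfolding DSk_def by blast
qed

lemma DSk_zero: "(\<lambda>z. 0) \<in> DSk m a l (M :: (real ^ 'n) set)"
proof -
  have "\<forall>i::'n. (\<lambda>z. 0) \<in> Sk M" by (simp add: Sk_zero del: Sk_def)
  moreover have "(\<lambda>z. 0) = (\<lambda>w. \<Sum>i\<in>(UNIV::'n set). Dx m a l i (\<lambda>z. 0) w)"
    by (simp add: Dx_zero)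
  ultimately show ?thesis unfolding DSk_def by (intro CollectI exI[of _ "\<lambda>i z. 0"]) simp
qed

lemma DSk_sum: "finite J \<Longrightarrow> \<forall>j\<in>J. f j \<in> DSk m a l M \<Longrightarrow> (\<lambda>z. \<Sum>j\<in>J. c j * f j z) \<in> DSk m a l M"
proof (induction J rule: finite_induct)
  case empty then show ?case by (simp add: DSk_zero)
next
  case (insert x F)
  then have "(\<lambda>z. c x * f x z + (\<Sum>j\<in>F. c j * f j z)) \<in> DSk m a l M"
    by (intro DSk_add DSk_smult) auto
  then show ?case using insert by simp
qed

context P81
begin

abbreviation "Mk \<equiv> VZ m a \<inter> coneA m a \<inter> Ck"
abbreviation "II \<equiv> DSk m a l Mk"
abbreviation "Bi \<equiv> Bk_int m a Ck"

definition Intp :: "real ^ 'n \<Rightarrow> bool" where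
  "Intp w \<longleftrightarrow> w \<in> VZ m a \<and> w \<in> Ck \<and> (\<forall>j\<in>{1..m}. 0 < co j w)"

definition good :: "(real ^ 'n) set \<Rightarrow> 'n lpoly \<Rightarrow> bool" where
  "good F g \<longleftrightarrow> (\<exists>h\<in>II. \<forall>z. z \<notin> F \<longrightarrow> g z = h z)"

lemma Intp_M: "Intp w \<Longrightarrow> w \<in> Mk"
  unfolding Intp_def using pos_cone unfolding VZ_def by (auto intro: less_imp_le)

lemma fin_region: "finite {w. w \<in> VZ m a \<and> (\<forall>j\<in>{1..m}. co j w \<ge> 0) \<and> deg w \<le> d}"
proof -
  define Am where "Am = (\<Sum>k\<in>{1..m}. norm (a k))"
  have Am0: "Am \<ge> 0" unfolding Am_def by (simp add: sum_nonneg)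
  have "{w. w \<in> VZ m a \<and> (\<forall>j\<in>{1..m}. co j w \<ge> 0) \<and> deg w \<le> d} \<subseteq> {w. lattice_pt w \<and> norm w \<le> d * Am}"
  proof safe
    fix w assume w: "w \<in> VZ m a" "\<forall>j\<in>{1..m}. co j w \<ge> 0" "deg w \<le> d"
    then show "lattice_pt w" unfolding VZ_def by auto
    have "norm w = norm (\<Sum>k\<in>{1..m}. co k w *\<^sub>R a k)" using co_repr w(1) unfolding VZ_def by auto
    also have "\<dots> \<le> (\<Sum>k\<in>{1..m}. norm (co k w *\<^sub>R a k))" by (rule norm_sum)
    also have "\<dots> = (\<Sum>k\<in>{1..m}. co k w * norm (a k))" using w(2) by (intro sum.cong) auto
    also have "\<dots> \<le> (\<Sum>k\<in>{1..m}. co k w * Am)"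
    proof (rule sum_mono)
      fix k assume k: "k \<in> {1..m}"
      have "norm (a k) \<le> Am" unfolding Am_def using k by (intro member_le_sum) auto
      then show "co k w * norm (a k) \<le> co k w * Am" using w(2) k by (intro mult_left_mono) auto
    qed
    also have "\<dots> = deg w * Am" unfolding deg_def by (simp add: sum_distrib_right)
    also have "\<dots> \<le> d * Am" using w(3) Am0 by (rule mult_right_mono)
    finally show "norm w \<le> d * Am" .
  qed
  then show ?thesis using finite_lattice_bounded finite_subset by blast
qed

lemma Bi_char: "Bi = {w. w \<in> VZ m a \<and> w \<in> Ck \<and> (\<forall>j\<in>{1..m}. 0 < co j w \<and> co j w < 1)}"
proof safe
  fix w assume "w \<in> Bi"
  then obtain v where w: "w \<in> VZ m a" "w \<in> Ck" "\<forall>j\<in>{1..m}. 0 < v j \<and> v j < 1"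
     "w = (\<Sum>j\<in>{1..m}. v j *\<^sub>R a j)" unfolding Bk_int_def by auto
  have co: "co j w = v j" if j: "j \<in> {1..m}" for j
  proof -
    have "co j w = (\<Sum>k\<in>{1..m}. v k * (if k = j then 1 else 0))"
      using w(4) by (simp add: co_sum co_scale co_a)
    also have "\<dots> = v j" using j by (simp only: sum_mult_delta[OF finite_atLeastAtMost])
    finally show ?thesis .
  qed
  show "w \<in> VZ m a" "w \<in> Ck" by fact+
  fix j assume "j \<in> {1..m}"
  then show "0 < co j w" "co j w < 1" using co w(3) by auto
next
  fix w assume w: "w \<in> VZ m a" "w \<in> Ck" "\<forall>j\<in>{1..m}. 0 < co j w \<and> co j w < 1"
  have "w = (\<Sum>j\<in>{1..m}. co j w *\<^sub>R a j)" using co_repr w(1) unfolding VZ_def by auto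
  then have "\<exists>v. (\<forall>j\<in>{1..m}. 0 < v j \<and> v j < 1) \<and> w = (\<Sum>j\<in>{1..m}. v j *\<^sub>R a j)"
    using w(3) by (intro exI[of _ "\<lambda>j. co j w"]) auto
  then show "w \<in> Bi" unfolding Bk_int_def using w(1,2) by blast
qed

lemma Bi_Intp: "w \<in> Bi \<Longrightarrow> Intp w"
  unfolding Bi_char Intp_def by auto

lemma Bi_fin: "finite Bi"
proof -
  have "Bi \<subseteq> {w. w \<in> VZ m a \<and> (\<forall>j\<in>{1..m}. co j w \<ge> 0) \<and> deg w \<le> real m}"
  proof safe
    fix w assume w: "w \<in> Bi"
    then show "w \<in> VZ m a" unfolding Bi_char by auto
    have ww: "\<forall>j\<in>{1..m}. 0 < co j w \<and> co j w < 1" using w unfolding Bi_char by simp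
    show "0 \<le> co j w" if "j \<in> {1..m}" for j using bspec[OF ww that] by simp
    have "deg w \<le> (\<Sum>j\<in>{1..m}. 1)" unfolding deg_def
    proof (rule sum_mono)
      fix j assume "j \<in> {1..m}"
      then show "co j w \<le> 1" using bspec[OF ww \<open>j \<in> {1..m}\<close>] by simp
    qed
    then show "deg w \<le> real m" by simp
  qed
  then show ?thesis using fin_region finite_subset by blast
qed

lemma good_add: "good F g \<Longrightarrow> good F h \<Longrightarrow> good F (\<lambda>z. g z + h z)"
  unfolding good_def by (metis (mono_tags, lifting) DSk_add)
lemma good_smult: "good F g \<Longrightarrow> good F (\<lambda>z. c * g z)"
  unfolding good_def by (metis (mono_tags, lifting) DSk_smult)
lemma good_I: "h \<in> II \<Longrightarrow> good F h"
  unfolding good_def by blast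
lemma good_supp: "(\<forall>z. g z \<noteq> 0 \<longrightarrow> z \<in> F) \<Longrightarrow> good F g"
proof -
  assume H: "\<forall>z. g z \<noteq> 0 \<longrightarrow> z \<in> F"
  show ?thesis unfolding good_def
  proof (rule bexI[of _ "\<lambda>z. 0"])
    show "\<forall>z. z \<notin> F \<longrightarrow> g z = 0" using H by auto
    show "(\<lambda>z. 0) \<in> II" by (rule DSk_zero)
  qed
qed
lemma good_mono: "F \<subseteq> F' \<Longrightarrow> good F g \<Longrightarrow> good F' g"
  unfolding good_def by (meson subsetD)
lemma good_cong: "good F g \<Longrightarrow> (\<And>z. g z = h z) \<Longrightarrow> good F h"
proof -
  assume "good F g" "\<And>z. g z = h z"
  then have "g = h" by auto
  then show "good F h" using \<open>good F g\<close> by simp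
qed
lemma good_sum: "finite S \<Longrightarrow> \<forall>s\<in>S. good F (f s) \<Longrightarrow> good F (\<lambda>z. \<Sum>s\<in>S. c s * f s z)"
proof (induction S rule: finite_induct)
  case empty then show ?case by (auto intro: good_supp)
next
  case (insert x S)
  then have "good F (\<lambda>z. c x * f x z + (\<Sum>s\<in>S. c s * f s z))"
    by (intro good_add good_smult) auto
  then show ?case using insert by simp
qed

lemma good_monoms:
  assumes "finite S" "\<forall>z. g z \<noteq> 0 \<longrightarrow> z \<in> S" "\<forall>z\<in>S. good F (monom z)"
  shows "good F g"
proof -
  have "good F (\<lambda>y. \<Sum>z\<in>S. g z * monom z y)" using good_sum[OF assms(1) assms(3)] by simp
  moreover have "(\<Sum>z\<in>S. g z * monom z y) = g y" for y
  proof -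
    have "(\<Sum>z\<in>S. g z * monom z y) = (\<Sum>z\<in>S. if z = y then g y else 0)"
      unfolding monom_def by (rule sum.cong) auto
    also have "\<dots> = g y" using assms(1,2) by (cases "y \<in> S") auto
    finally show ?thesis .
  qed
  ultimately show ?thesis by (rule good_cong)
qed

end

lemma lat_floor: "lattice_pt x \<Longrightarrow> (of_int \<lfloor>x $ i\<rfloor> :: ratfun) = emb (x $ i)"
proof -
  assume "lattice_pt x"
  then have "x $ i \<in> \<int>" unfolding lattice_pt_def by auto
  then obtain n where n: "x $ i = of_int n" by (auto elim!: Ints_cases)
  then show ?thesis by simp
qed

lemma monom_shift: "monom w (z - v) = monom (w + v) z"
  unfolding monom_def by (auto simp: algebra_simps)

context P81
begin

lemma rel_mem:
  assumes j: "j \<in> {1..m}" and w: "w \<in> Mk"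
  shows "(\<lambda>z. emb (co j w) * monom w z + of_nat (l j) * monom (w + a j) z
              - of_nat (l j) * lam * monom (w + a 0) z) \<in> II"
proof -
  define \<phi> where "\<phi> i = co j (axis i 1)" for i
  define G where "G i = (\<lambda>z. emb (\<phi> i) * monom w z)" for i
  have GS: "\<forall>i. G i \<in> Sk Mk" unfolding G_def using w by (auto intro: monom_Sk)
  have wl: "lattice_pt w" using w unfolding VZ_def by auto
  have al: "k \<in> {0..m} \<Longrightarrow> lattice_pt (a k)" for k using lat by auto
  have eq: "(\<Sum>i\<in>UNIV. Dx m a l i (G i) z) = emb (co j w) * monom w z + of_nat (l j) * monom (w + a j) z
              - of_nat (l j) * lam * monom (w + a 0) z" for z
  proof -
    define P0 where "P0 = monom w z"
    define Pk where "Pk k = monom (w + a k) z" for k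
    have step1: "Dx m a l i (G i) z = emb (\<phi> i) * (emb (w $ i) * P0
        + (\<Sum>k\<in>{1..m}. of_nat (l k) * emb (a k $ i) * Pk k) - of_nat (l 0) * lam * emb (a 0 $ i) * Pk 0)" for i
    proof -
      have t0: "of_int \<lfloor>z $ i\<rfloor> * G i z = emb (\<phi> i) * (emb (w $ i) * P0)"
        unfolding G_def P0_def monom_def using lat_floor[OF wl] by auto
      have t1: "(\<Sum>k\<in>{1..m}. of_nat (l k) * of_int \<lfloor>a k $ i\<rfloor> * G i (z - a k))
          = emb (\<phi> i) * (\<Sum>k\<in>{1..m}. of_nat (l k) * emb (a k $ i) * Pk k)"
        unfolding sum_distrib_left
      proof (rule sum.cong)
        fix k assume "k \<in> {1..m}"
        then have "(of_int \<lfloor>a k $ i\<rfloor> :: ratfun) = emb (a k $ i)" using lat_floor al by auto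
        then show "of_nat (l k) * of_int \<lfloor>a k $ i\<rfloor> * G i (z - a k) = emb (\<phi> i) * (of_nat (l k) * emb (a k $ i) * Pk k)"
          unfolding G_def Pk_def monom_shift by (simp add: algebra_simps)
      qed simp
      have t2: "of_nat (l 0) * lam * of_int \<lfloor>a 0 $ i\<rfloor> * G i (z - a 0) = emb (\<phi> i) * (of_nat (l 0) * lam * emb (a 0 $ i) * Pk 0)"
      proof -
        have "(of_int \<lfloor>a 0 $ i\<rfloor> :: ratfun) = emb (a 0 $ i)" using lat_floor al by auto
        then show ?thesis unfolding G_def Pk_def monom_shift by (simp add: algebra_simps)
      qed
      show ?thesis unfolding Dx_def t0 t1 t2 by (simp add: algebra_simps)
    qed
    have s0: "(\<Sum>i\<in>UNIV. emb (\<phi> i) * emb (w $ i)) = emb (co j w)"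
      by (simp add: co_expand[of j w] emb_sum emb_mult \<phi>_def mult.commute)
    have s1: "(\<Sum>i\<in>UNIV. emb (\<phi> i) * (\<Sum>k\<in>{1..m}. of_nat (l k) * emb (a k $ i) * Pk k))
        = of_nat (l j) * Pk j"
    proof -
      have "(\<Sum>i\<in>UNIV. emb (\<phi> i) * (\<Sum>k\<in>{1..m}. of_nat (l k) * emb (a k $ i) * Pk k))
          = (\<Sum>k\<in>{1..m}. of_nat (l k) * Pk k * (\<Sum>i\<in>UNIV. emb (\<phi> i) * emb (a k $ i)))"
        by (simp add: sum_distrib_left sum_distrib_right sum.swap[of _ UNIV] algebra_simps)
      also have "\<dots> = (\<Sum>k\<in>{1..m}. of_nat (l k) * Pk k * emb (co j (a k)))"
        by (simp add: co_expand[of j "a _"] emb_sum emb_mult \<phi>_def mult.commute)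
      also have "\<dots> = (\<Sum>k\<in>{1..m}. of_nat (l k) * Pk k * (if k = j then 1 else 0))"
        by (rule sum.cong) (auto simp: co_a)
      also have "\<dots> = of_nat (l j) * Pk j" using j by (simp only: sum_mult_delta[OF finite_atLeastAtMost])
      finally show ?thesis .
    qed
    have s2: "(\<Sum>i\<in>UNIV. emb (\<phi> i) * (of_nat (l 0) * lam * emb (a 0 $ i) * Pk 0))
        = of_nat (l j) * lam * Pk 0"
    proof -
      have "(\<Sum>i\<in>UNIV. emb (\<phi> i) * (of_nat (l 0) * lam * emb (a 0 $ i) * Pk 0))
          = of_nat (l 0) * lam * Pk 0 * (\<Sum>i\<in>UNIV. emb (\<phi> i) * emb (a 0 $ i))"
        by (simp add: sum_distrib_left algebra_simps)
      also have "(\<Sum>i\<in>UNIV. emb (\<phi> i) * emb (a 0 $ i)) = emb (co j (a 0))"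
        by (simp add: co_expand[of j "a 0"] emb_sum emb_mult \<phi>_def mult.commute)
      also have "co j (a 0) = real (l j) / real (l 0)" using co_a0 j by simp
      also have "of_nat (l 0) * lam * Pk 0 * emb (real (l j) / real (l 0)) = lam * Pk 0 * (of_nat (l 0) * emb (real (l j) / real (l 0)))"
        by (simp add: algebra_simps)
      also have "of_nat (l 0) * emb (real (l j) / real (l 0)) = (of_nat (l j) :: ratfun)"
      proof -
        have "real (l 0) * (real (l j) / real (l 0)) = real (l j)" using l0_pos by simp
        then have "emb (real (l 0)) * emb (real (l j) / real (l 0)) = emb (real (l j))" by (metis emb_mult)
        then show ?thesis by simp
      qed
      finally show ?thesis by simp
    qed
    have "(\<Sum>i\<in>UNIV. Dx m a l i (G i) z) = (\<Sum>i\<in>UNIV. emb (\<phi> i) * emb (w $ i)) * P0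
        + (\<Sum>i\<in>UNIV. emb (\<phi> i) * (\<Sum>k\<in>{1..m}. of_nat (l k) * emb (a k $ i) * Pk k))
        - (\<Sum>i\<in>UNIV. emb (\<phi> i) * (of_nat (l 0) * lam * emb (a 0 $ i) * Pk 0))"
      unfolding step1 by (simp add: algebra_simps sum.distrib sum_subtractf sum_distrib_right sum_distrib_left)
    also have "\<dots> = emb (co j w) * P0 + of_nat (l j) * Pk j - of_nat (l j) * lam * Pk 0"
      unfolding s0 s1 s2 ..
    finally show ?thesis unfolding P0_def Pk_def .
  qed
  have "(\<lambda>z. emb (co j w) * monom w z + of_nat (l j) * monom (w + a j) z
              - of_nat (l j) * lam * monom (w + a 0) z) = (\<lambda>z. \<Sum>i\<in>UNIV. Dx m a l i (G i) z)"
    using eq by simp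
  then show ?thesis unfolding DSk_def using GS by blast
qed

end

context P81
begin

lemma co_shift: "k \<in> {1..m} \<Longrightarrow> j \<in> {1..m} \<Longrightarrow> co k (w - a j) = co k w - (if k = j then 1 else 0)"
  by (simp add: co_diff co_a)
lemma co_shift0: "k \<in> {1..m} \<Longrightarrow> co k (w + a 0) = co k w + real (l k) / real (l 0)"
  by (simp add: co_add co_a0)

lemma step:
  assumes w: "Intp w" and j: "j \<in> {1..m}" and c1: "co j w \<ge> 1"
    and IH: "\<forall>z. Intp z \<and> deg z < deg w \<longrightarrow> good Bi (monom z)"
  shows "good Bi (\<lambda>z. monom w z - lam * monom (w - a j + a 0) z)"
proof -
  define w' where "w' = w - a j"
  have wVZ: "w \<in> VZ m a" and wC: "w \<in> Ck" and wpos: "\<forall>k\<in>{1..m}. 0 < co k w"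
    using w unfolding Intp_def by auto
  have w'VZ: "w' \<in> VZ m a" unfolding w'_def using wVZ a_VZ j by (auto intro: VZ_diff)
  have w'C: "w' \<in> Ck" unfolding w'_def using wC Ck_diff j by auto
  have cok: "co k w' = co k w - (if k = j then 1 else 0)" if "k \<in> {1..m}" for k
    unfolding w'_def using co_shift that j by auto
  have "\<forall>k\<in>{1..m}. co k w' \<ge> 0"
  proof
    fix k assume k: "k \<in> {1..m}"
    show "co k w' \<ge> 0" using cok[OF k] c1 bspec[OF wpos k] by (cases "k = j") auto
  qed
  then have w'M: "w' \<in> Mk" using pos_cone w'VZ w'C unfolding VZ_def by auto
  define E where "E = (\<lambda>z. emb (co j w') * monom w' z + of_nat (l j) * monom (w' + a j) z
              - of_nat (l j) * lam * monom (w' + a 0) z)"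
  have EI: "E \<in> II" unfolding E_def by (rule rel_mem[OF j w'M])
  have w'aj: "w' + a j = w" unfolding w'_def by simp
  have w'a0: "w' + a 0 = w - a j + a 0" unfolding w'_def by simp
  have lj: "(of_nat (l j) :: ratfun) \<noteq> 0" using ratfun_of_nat_nz lj_pos[OF j] by auto
  have good_w': "good Bi (\<lambda>z. emb (co j w') * monom w' z)"
  proof (cases "co j w' = 0")
    case True
    then show ?thesis by (auto intro: good_supp)
  next
    case False
    have "Intp w'"
      unfolding Intp_def
    proof (intro conjI ballI)
      fix k assume k: "k \<in> {1..m}"
      show "0 < co k w'"
        using cok[OF k] c1 bspec[OF wpos k] False cok[OF j] by (cases "k = j") auto
    qed (use w'VZ w'C in auto)
    moreover have "deg w' < deg w" unfolding w'_def using deg_diff deg_a[OF j] by simp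
    ultimately have "good Bi (monom w')" using IH by blast
    then show ?thesis by (rule good_smult)
  qed
  have "good Bi (\<lambda>z. inverse (of_nat (l j)) * E z + (- inverse (of_nat (l j))) * (emb (co j w') * monom w' z))"
    by (intro good_add good_smult good_I EI good_w')
  then show ?thesis
  proof (rule good_cong)
    fix z
    show "inverse (of_nat (l j)) * E z + (- inverse (of_nat (l j))) * (emb (co j w') * monom w' z)
        = monom w z - lam * monom (w - a j + a 0) z"
      unfolding E_def w'aj w'a0 using lj by (simp add: field_simps)
  qed
qed

definition J :: "real ^ 'n \<Rightarrow> nat" where "J z = (SOME j. j \<in> {1..m} \<and> co j z \<ge> 1)"
definition sig :: "real ^ 'n \<Rightarrow> real ^ 'n" where "sig z = z - a (J z) + a 0"

lemma J_props:
  assumes "Intp z" "z \<notin> Bi"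
  shows "J z \<in> {1..m}" "co (J z) z \<ge> 1"
proof -
  have "\<exists>j. j \<in> {1..m} \<and> co j z \<ge> 1"
  proof (rule ccontr)
    assume "\<not> ?thesis"
    then have "\<forall>j\<in>{1..m}. 0 < co j z \<and> co j z < 1" using assms(1) unfolding Intp_def by force
    then have "z \<in> Bi" using assms(1) unfolding Bi_char Intp_def by auto
    then show False using assms(2) by simp
  qed
  then have "J z \<in> {1..m} \<and> co (J z) z \<ge> 1" unfolding J_def by (rule someI_ex)
  then show "J z \<in> {1..m}" "co (J z) z \<ge> 1" by auto
qed

lemma sig_props:
  assumes z: "Intp z" "z \<notin> Bi"
  shows "Intp (sig z)" "deg (sig z) = deg z"
proof -
  note Jp = J_props[OF z]
  have zVZ: "z \<in> VZ m a" and zC: "z \<in> Ck" and zpos: "\<forall>k\<in>{1..m}. 0 < co k z"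
    using z unfolding Intp_def by auto
  have "sig z \<in> VZ m a" unfolding sig_def using zVZ a_VZ Jp(1)
    by (intro VZ_add VZ_diff) auto
  moreover have "sig z \<in> Ck" unfolding sig_def using Ck_add0 Ck_diff zC Jp(1) by auto
  moreover have "0 < co k (sig z)" if k: "k \<in> {1..m}" for k
  proof -
    have "co k (sig z) = co k z - (if k = J z then 1 else 0) + real (l k) / real (l 0)"
      unfolding sig_def using co_shift0[OF k] co_shift[OF k Jp(1)] by simp
    moreover have "real (l k) / real (l 0) > 0" using lj_pos[OF k] l0_pos by simp
    ultimately show ?thesis using Jp(2) bspec[OF zpos k] by (cases "k = J z") auto
  qed
  ultimately show "Intp (sig z)" unfolding Intp_def by auto
  show "deg (sig z) = deg z" unfolding sig_def using deg_add deg_diff deg_a[OF Jp(1)] deg_a0 by simp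
qed

lemma iter:
  assumes IHd: "\<forall>z. Intp z \<and> deg z < d \<longrightarrow> good Bi (monom z)"
  shows "Intp z \<Longrightarrow> deg z = d \<Longrightarrow> (\<forall>s<t. (sig ^^ s) z \<notin> Bi) \<Longrightarrow>
    Intp ((sig ^^ t) z) \<and> deg ((sig ^^ t) z) = d \<and> good Bi (\<lambda>y. monom z y - lam ^ t * monom ((sig ^^ t) z) y)"
proof (induction t)
  case 0
  then show ?case by (auto intro: good_supp)
next
  case (Suc t)
  define p where "p = (sig ^^ t) z"
  have IH: "Intp p" "deg p = d" "good Bi (\<lambda>y. monom z y - lam ^ t * monom p y)"
    using Suc unfolding p_def by auto
  have pB: "p \<notin> Bi" using Suc.prems(3) unfolding p_def by auto
  note Jp = J_props[OF IH(1) pB]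
  have "good Bi (\<lambda>y. monom p y - lam * monom (p - a (J p) + a 0) y)"
    using step[OF IH(1) Jp] IHd IH(2) by blast
  then have g2: "good Bi (\<lambda>y. monom p y - lam * monom (sig p) y)" unfolding sig_def .
  have "good Bi (\<lambda>y. (monom z y - lam ^ t * monom p y) + lam ^ t * (monom p y - lam * monom (sig p) y))"
    by (intro good_add good_smult IH(3) g2)
  then have "good Bi (\<lambda>y. monom z y - lam ^ Suc t * monom (sig p) y)"
    by (rule good_cong) (simp add: algebra_simps)
  moreover have "(sig ^^ Suc t) z = sig p" unfolding p_def by simp
  ultimately show ?case using sig_props[OF IH(1) pB] IH(2) by simp
qed

lemma Intp_region: "{z. Intp z \<and> deg z \<le> d} \<subseteq> {w. w \<in> VZ m a \<and> (\<forall>j\<in>{1..m}. co j w \<ge> 0) \<and> deg w \<le> d}"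
  unfolding Intp_def by (auto intro: less_imp_le)

lemma Intp_fin: "finite {z. Intp z \<and> deg z \<le> d}"
  using Intp_region fin_region finite_subset by blast

lemma combine:
  assumes "good Bi (\<lambda>y. monom w y - c * monom p y)" "good Bi (monom p)"
  shows "good Bi (monom w)"
proof -
  have "good Bi (\<lambda>y. (monom w y - c * monom p y) + c * monom p y)"
    by (intro good_add good_smult assms)
  then show ?thesis by (rule good_cong) simp
qed

lemma key: "Intp w \<Longrightarrow> good Bi (monom w)"
proof (induction "card {z. Intp z \<and> deg z < deg w}" arbitrary: w rule: less_induct)
  case less
  have IHd: "\<forall>z. Intp z \<and> deg z < deg w \<longrightarrow> good Bi (monom z)"
  proof (intro allI impI)
    fix z assume z: "Intp z \<and> deg z < deg w"
    have "{y. Intp y \<and> deg y < deg z} \<subset> {y. Intp y \<and> deg y < deg w}"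
      using z by auto
    moreover have "finite {y. Intp y \<and> deg y < deg w}"
      using Intp_fin[of "deg w"] by (rule finite_subset[rotated]) auto
    ultimately have "card {y. Intp y \<and> deg y < deg z} < card {y. Intp y \<and> deg y < deg w}"
      by (rule psubset_card_mono[rotated])
    then show "good Bi (monom z)" using less z by blast
  qed
  define X where "X = {z. Intp z \<and> deg z = deg w}"
  have Xfin: "finite X" unfolding X_def using Intp_fin[of "deg w"] by (rule finite_subset[rotated]) auto
  define N where "N = card X"
  note it = iter[OF IHd less.prems refl]
  show ?case
  proof (cases "\<exists>s. s \<le> N \<and> (sig ^^ s) w \<in> Bi")
    case True
    then obtain s where s: "(sig ^^ s) w \<in> Bi" "\<forall>s'<s. (sig ^^ s') w \<notin> Bi"
      using exists_least_iff[of "\<lambda>s. (sig ^^ s) w \<in> Bi"] by blast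
    have g1: "good Bi (\<lambda>y. monom w y - lam ^ s * monom ((sig ^^ s) w) y)" using it s(2) by blast
    have g2: "good Bi (monom ((sig ^^ s) w))" using s(1) by (intro good_supp) (auto simp: monom_def)
    show ?thesis by (rule combine[OF g1 g2])
  next
    case False
    then have nB: "\<forall>s\<le>N. (sig ^^ s) w \<notin> Bi" by auto
    define f where "f s = (sig ^^ s) w" for s
    have fX: "f ` {0..N} \<subseteq> X"
    proof
      fix y assume "y \<in> f ` {0..N}"
      then obtain s where s: "s \<le> N" "y = f s" by auto
      have "\<forall>s'<s. (sig ^^ s') w \<notin> Bi" using nB s(1) by auto
      then show "y \<in> X" using it s unfolding X_def f_def by blast
    qed
    have "card (f ` {0..N}) \<le> N" using card_mono[OF Xfin fX] unfolding N_def by simp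
    then have "card {0..N} > card (f ` {0..N})" by simp
    then have "\<not> inj_on f {0..N}" by (rule pigeonhole)
    then obtain s1 s2 where s12: "s1 \<le> N" "s2 \<le> N" "s1 < s2" "f s1 = f s2"
      unfolding inj_on_def by (metis atLeastAtMost_iff linorder_neqE_nat)
    define p where "p = f s1"
    define t where "t = s2 - s1"
    have t1: "t \<ge> 1" unfolding t_def using s12 by simp
    have itw: "Intp p \<and> deg p = deg w \<and> good Bi (\<lambda>y. monom w y - lam ^ s1 * monom p y)"
      using it nB s12(1) unfolding p_def f_def by auto
    have shift: "(sig ^^ s) p = f (s + s1)" for s unfolding p_def f_def by (simp add: funpow_add)
    have "\<forall>s<t. (sig ^^ s) p \<notin> Bi"
      using nB s12 unfolding shift t_def f_def by auto
    then have "good Bi (\<lambda>y. monom p y - lam ^ t * monom ((sig ^^ t) p) y)"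
      using iter[OF IHd] itw by blast
    moreover have "(sig ^^ t) p = p" unfolding shift t_def using s12 p_def by simp
    ultimately have "good Bi (\<lambda>y. monom p y - lam ^ t * monom p y)" by simp
    then have "good Bi (\<lambda>y. inverse (1 - lam ^ t) * (monom p y - lam ^ t * monom p y))"
      by (rule good_smult)
    then have gp: "good Bi (monom p)"
      by (rule good_cong) (use one_minus_lam_pow[OF t1] in \<open>simp add: field_simps\<close>)
    show ?thesis using combine itw gp by blast
  qed
qed

end

lemma Dlam_supp:
  "(Dlam a l ^^ i) (monom u) z \<noteq> 0 \<Longrightarrow> z \<in> (\<lambda>s. u + of_nat s *\<^sub>R a 0) ` {0..i}"
proof (induction i arbitrary: z)
  case 0
  then show ?case by (auto simp: monom_def split: if_splits)
next
  case (Suc i)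
  let ?g = "(Dlam a l ^^ i) (monom u)"
  have "(Dlam a l ^^ Suc i) (monom u) z = ratfun_deriv (?g z) - of_nat (l 0) * ?g (z - a 0)"
    by (simp only: funpow.simps comp_apply) (simp only: Dlam_def)
  then have "ratfun_deriv (?g z) - of_nat (l 0) * ?g (z - a 0) \<noteq> 0"
    using Suc.prems by simp
  then have "?g z \<noteq> 0 \<or> ?g (z - a 0) \<noteq> 0" using ratfun_deriv_0 by auto
  then show ?case
  proof
    assume "?g z \<noteq> 0"
    then obtain s where s: "s \<le> i" "z = u + of_nat s *\<^sub>R a 0" using Suc.IH by fastforce
    then have "Suc s \<le> Suc i" by simp
    show ?thesis by (rule image_eqI[of _ _ s]) (use s in auto)
  next
    assume "?g (z - a 0) \<noteq> 0"
    then obtain s where s: "s \<le> i" "z - a 0 = u + of_nat s *\<^sub>R a 0" using Suc.IH by fastforce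
    then have "z = u + of_nat (Suc s) *\<^sub>R a 0" by (simp add: algebra_simps)
    moreover have "Suc s \<in> {0..Suc i}" using s by simp
    ultimately show ?thesis by blast
  qed
qed

context P81
begin

lemma relint_pos:
  assumes u: "u \<in> rel_interior (coneA m a)" and j: "j \<in> {1..m}"
  shows "co j u > 0"
proof (rule ccontr)
  assume "\<not> co j u > 0"
  have "u \<in> coneA m a \<and> (\<exists>e. e > 0 \<and> cball u e \<inter> affine hull (coneA m a) \<subseteq> coneA m a)"
    using u by (simp only: mem_rel_interior_cball)
  then obtain e where uC: "u \<in> coneA m a" and e: "e > 0" "cball u e \<inter> affine hull (coneA m a) \<subseteq> coneA m a"
    by (elim conjE exE)
  have cu: "co j u = 0" using cone_co[OF uC j] \<open>\<not> co j u > 0\<close> by simp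
  have aj0: "a j \<noteq> 0"
  proof
    assume "a j = 0"
    then have "0 \<in> a ` {1..m}" using j by (metis image_eqI)
    then have "dependent (a ` {1..m})" by (rule dependent_zero)
    then show False using indep by simp
  qed
  define t where "t = e / norm (a j)"
  have t: "t > 0" unfolding t_def using e aj0 by simp
  define p where "p = u - t *\<^sub>R a j"
  have "dist u p = e" unfolding p_def t_def using aj0 e(1) by (simp add: dist_norm)
  then have pc: "p \<in> cball u e" by simp
  have zC: "0 \<in> coneA m a" unfolding coneA_def
    by (rule subsetD[OF closure_subset convex_cone_hull_contains_0])
  have "a j \<in> a ` {1..m}" using j by simp
  then have "a j \<in> convex_cone hull (a ` {1..m})" by (rule hull_inc)
  then have ajC: "a j \<in> coneA m a" unfolding coneA_def by (rule subsetD[OF closure_subset])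
  have "affine hull (coneA m a) = span (coneA m a)"
    by (rule affine_hull_span_0) (rule hull_inc[OF zC])
  moreover have "p \<in> span (coneA m a)" unfolding p_def using uC ajC
    by (intro span_diff span_mul span_base)
  ultimately have "p \<in> coneA m a" using e(2) pc by auto
  then have "co j p \<ge> 0" using cone_co j by simp
  moreover have "co j p = - t" unfolding p_def using cu co_diff co_scale co_a[OF j] by simp
  ultimately show False using t by simp
qed

lemma pts_props:
  assumes u: "u \<in> Mk"
  shows "u + of_nat s *\<^sub>R a 0 \<in> VZ m a" "u + of_nat s *\<^sub>R a 0 \<in> Ck"
    "k \<in> {1..m} \<Longrightarrow> co k (u + of_nat s *\<^sub>R a 0) = co k u + real s * (real (l k) / real (l 0))"
proof -
  show "u + of_nat s *\<^sub>R a 0 \<in> VZ m a"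
  proof (induction s)
    case 0 then show ?case using u by simp
  next
    case (Suc s)
    have "u + of_nat (Suc s) *\<^sub>R a 0 = (u + of_nat s *\<^sub>R a 0) + a 0" by (simp add: algebra_simps)
    then show ?case by (subst \<open>u + of_nat (Suc s) *\<^sub>R a 0 = (u + of_nat s *\<^sub>R a 0) + a 0\<close>) (rule VZ_add[OF Suc.IH a_VZ], simp)
  qed
  show "u + of_nat s *\<^sub>R a 0 \<in> Ck"
  proof (induction s)
    case 0 then show ?case using u by simp
  next
    case (Suc s)
    have "u + of_nat (Suc s) *\<^sub>R a 0 = (u + of_nat s *\<^sub>R a 0) + a 0" by (simp add: algebra_simps)
    then show ?case by (subst \<open>u + of_nat (Suc s) *\<^sub>R a 0 = (u + of_nat s *\<^sub>R a 0) + a 0\<close>) (rule Ck_add0[OF Suc.IH])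
  qed
  show "k \<in> {1..m} \<Longrightarrow> co k (u + of_nat s *\<^sub>R a 0) = co k u + real s * (real (l k) / real (l 0))"
    by (simp add: co_add co_scale co_a0)
qed

lemma pts_Intp:
  assumes u: "u \<in> Mk" and "Intp u \<or> s \<ge> 1"
  shows "Intp (u + of_nat s *\<^sub>R a 0)"
  unfolding Intp_def
proof (intro conjI ballI)
  show "u + of_nat s *\<^sub>R a 0 \<in> VZ m a" "u + of_nat s *\<^sub>R a 0 \<in> Ck" using pts_props[OF u] by auto
  fix k assume k: "k \<in> {1..m}"
  have c0: "co k u \<ge> 0" using cone_co k u by blast
  have q: "real (l k) / real (l 0) > 0" using lj_pos[OF k] l0_pos by simp
  show "0 < co k (u + of_nat s *\<^sub>R a 0)"
  proof (cases "Intp u")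
    case True
    then have "co k u > 0" using k unfolding Intp_def by auto
    then show ?thesis using pts_props(3)[OF u k] q by (simp add: add_pos_nonneg)
  next
    case False
    then have "real s \<ge> 1" using assms(2) by simp
    then have "real s * (real (l k) / real (l 0)) > 0" by (intro mult_pos_pos) (use q in auto)
    then show ?thesis using pts_props(3)[OF u k] c0 by simp
  qed
qed

lemma dep_conclusion:
  assumes F: "finite F" and K: "finite K" "card F < card K" and g: "\<forall>i\<in>K. good F (y i)"
  shows "\<exists>c. (\<exists>i\<in>K. c i \<noteq> 0) \<and> (\<lambda>w. \<Sum>i\<in>K. c i * y i w) \<in> II"
proof -
  have "\<forall>i\<in>K. \<exists>h. h \<in> II \<and> (\<forall>z. z \<notin> F \<longrightarrow> y i z = h z)" using g unfolding good_def by blast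
  then obtain h where h: "\<forall>i\<in>K. h i \<in> II \<and> (\<forall>z. z \<notin> F \<longrightarrow> y i z = h i z)"
    by (rule bchoice[THEN exE]) blast
  define \<alpha> where "\<alpha> i z = y i z - h i z" for i z
  have "\<forall>j\<in>K. \<forall>x. x \<notin> F \<longrightarrow> \<alpha> j x = 0" unfolding \<alpha>_def using h by auto
  then obtain c where c: "\<exists>j\<in>K. c j \<noteq> 0" "\<forall>x. (\<Sum>j\<in>K. c j * \<alpha> j x) = 0"
    using lin_dep[OF F K] by blast
  have "(\<lambda>w. \<Sum>i\<in>K. c i * h i w) \<in> II" using DSk_sum[OF K(1)] h by blast
  moreover have "(\<Sum>i\<in>K. c i * y i w) = (\<Sum>i\<in>K. c i * h i w)" for w
  proof -
    have "(\<Sum>i\<in>K. c i * y i w) = (\<Sum>i\<in>K. c i * \<alpha> i w) + (\<Sum>i\<in>K. c i * h i w)"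
      unfolding \<alpha>_def by (simp add: right_diff_distrib sum_subtractf)
    then show ?thesis using c(2) by simp
  qed
  ultimately show ?thesis using c(1) by auto
qed

lemma dep_atMost:
  assumes "finite F" "card F < N + 1" "\<forall>i\<le>N. good F (y i)"
  shows "\<exists>c. (\<exists>i\<le>N. c i \<noteq> 0) \<and> (\<lambda>w. \<Sum>i\<le>N. c i * y i w) \<in> II"
proof -
  have K: "finite {..N}" "card F < card {..N}" using assms(2) by auto
  have g: "\<forall>i\<in>{..N}. good F (y i)" using assms(3) by simp
  obtain c where c: "\<exists>i\<in>{..N}. c i \<noteq> 0" "(\<lambda>w. \<Sum>i\<in>{..N}. c i * y i w) \<in> II"
    using dep_conclusion[OF assms(1) K g] by blast
  show ?thesis
  proof (rule exI[of _ c], rule conjI)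
    from c(1) obtain i where i: "i \<in> {..N}" "c i \<noteq> 0" ..
    show "\<exists>i\<le>N. c i \<noteq> 0"
    proof (intro exI conjI)
      show "i \<le> N" using i(1) by simp
      show "c i \<noteq> 0" by (rule i(2))
    qed
    show "(\<lambda>w. \<Sum>i\<le>N. c i * y i w) \<in> II" using c(2) .
  qed
qed

lemma y_good:
  assumes u: "u \<in> Mk" and F: "\<forall>s\<le>i. good F (monom (u + of_nat s *\<^sub>R a 0))"
  shows "good F ((Dlam a l ^^ i) (monom u))"
proof (rule good_monoms)
  show "finite ((\<lambda>s. u + of_nat s *\<^sub>R a 0) ` {0..i})" by simp
  show "\<forall>z. (Dlam a l ^^ i) (monom u) z \<noteq> 0 \<longrightarrow> z \<in> (\<lambda>s. u + of_nat s *\<^sub>R a 0) ` {0..i}"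
    using Dlam_supp by blast
  show "\<forall>z\<in>(\<lambda>s. u + of_nat s *\<^sub>R a 0) ` {0..i}. good F (monom z)" using F by auto
qed

lemma main_a:
  assumes u: "u \<in> Mk" and ri: "u \<in> rel_interior (coneA m a)"
  shows "\<exists>c. (\<exists>i\<le>card Bi. c i \<noteq> 0) \<and> (\<lambda>w. \<Sum>i\<le>card Bi. c i * (Dlam a l ^^ i) (monom u) w) \<in> II"
proof -
  have "Intp u" unfolding Intp_def using u relint_pos[OF ri] by auto
  then have "\<forall>i\<le>card Bi. good Bi ((Dlam a l ^^ i) (monom u))"
    using y_good[OF u] key pts_Intp[OF u] by blast
  then show ?thesis by (rule dep_atMost[OF Bi_fin, rotated]) simp
qed

lemma main_b:
  assumes u: "u \<in> Mk"
  shows "\<exists>c. (\<exists>i\<le>card Bi + 1. c i \<noteq> 0) \<and> (\<lambda>w. \<Sum>i\<le>card Bi + 1. c i * (Dlam a l ^^ i) (monom u) w) \<in> II"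
proof -
  have gm: "good (insert u Bi) (monom (u + of_nat s *\<^sub>R a 0))" for s
  proof (cases "s = 0")
    case True
    then show ?thesis by (intro good_supp) (auto simp: monom_def)
  next
    case False
    then have "Intp (u + of_nat s *\<^sub>R a 0)" using pts_Intp[OF u] by simp
    then show ?thesis using key good_mono[of Bi "insert u Bi"] by blast
  qed
  have "\<forall>i\<le>card Bi + 1. good (insert u Bi) ((Dlam a l ^^ i) (monom u))"
    using y_good[OF u] gm by blast
  moreover have "card (insert u Bi) < card Bi + 1 + 1"
    using Bi_fin by (simp add: card_insert_if)
  moreover have "finite (insert u Bi)" using Bi_fin by simp
  ultimately show ?thesis by (intro dep_atMost)
qed

end

theorem proposition8p1:
  fixes m :: nat and a :: "nat \<Rightarrow> real ^ 'n" and l :: "nat \<Rightarrow> nat"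
    and Ck :: "(real ^ 'n) set" and u :: "real ^ 'n"
  assumes lat: "\<forall>j\<in>{0..m}. lattice_pt (a j)"
    and inj: "inj_on a {1..m}"
    and indep: "independent (a ` {1..m})"
    and lpos: "\<forall>j\<in>{0..m}. 0 < l j"
    and lgcd: "Gcd (l ` {0..m}) = 1"
    and rel: "real (l 0) *\<^sub>R a 0 = (\<Sum>j\<in>{1..m}. real (l j) *\<^sub>R a j)"
    and lsum: "l 0 = (\<Sum>j\<in>{1..m}. l j)"
    and coset: "\<exists>v\<in>VZ m a. Ck = (\<lambda>w. v + w) ` ZAplus m a"
    and uM: "u \<in> VZ m a \<inter> coneA m a \<inter> Ck"
  shows "(u \<in> rel_interior (coneA m a) \<longrightarrow>
            (\<exists>c :: nat \<Rightarrow> ratfun. (\<exists>i\<le>card (Bk_int m a Ck). c i \<noteq> 0) \<and>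
               (\<lambda>w. \<Sum>i\<le>card (Bk_int m a Ck). c i * ((Dlam a l ^^ i) (monom u)) w)
                 \<in> DSk m a l (VZ m a \<inter> coneA m a \<inter> Ck)))
       \<and> (u \<in> rel_frontier (coneA m a) \<longrightarrow>
            (\<exists>c :: nat \<Rightarrow> ratfun. (\<exists>i\<le>card (Bk_int m a Ck) + 1. c i \<noteq> 0) \<and>
               (\<lambda>w. \<Sum>i\<le>card (Bk_int m a Ck) + 1. c i * ((Dlam a l ^^ i) (monom u)) w)
                 \<in> DSk m a l (VZ m a \<inter> coneA m a \<inter> Ck)))"
proof -
  interpret P: P81 m a l Ck
    using lat inj indep lpos rel lsum coset by unfold_locales
  show ?thesis using P.main_a[OF uM] P.main_b[OF uM] by blast
qed

end
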